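(* Let $\mathcal{H}_r$ be a Hirzebruch surface, $\beta$ an ample class, $f\in S_\beta$ nondegenerate, and assume $J_1(f)_{2\beta+2K_{\mathcal{H}_r}}\neq0$. For every $h\in J_1(f)_\beta\setminus\mathbb{C}f$ and all $a,b\in S_{\beta+2K_{\mathcal{H}_r}}$ not both zero, $af+bh\neq0$ in $S_{2\beta+2K_{\mathcal{H}_r}}$. In particular, the space $E_h=\{af+bh: a,b\in S_{\beta+2K_{\mathcal{H}_r}}\}$ has $\dim E_h=2\dim S_{\beta+2K_{\mathcal{H}_r}}$.
   Context: $\mathcal{H}_r$ ($r\ge0$) is the smooth complete toric surface with ray generators $(-1,r),(0,1),(1,0),(0,-1)$ and torus-invariant divisors $D_1,\dots,D_4$; its Cox ring $S=\mathbb{C}[x_1,x_2,x_3,x_4]$ is graded by $\operatorname{Pic}=\mathbb{Z}D_1\oplus\mathbb{Z}D_2$ with $\deg x_1=\deg x_3=D_1$, $\deg x_2=D_2$, $\deg x_4=rD_1+D_2$; $S_\alpha$ is the degree-$\alpha$ part. $K_{\mathcal{H}_r}=-(r+2)D_1-2D_2$. $f\in S_\beta$ is nondegenerate if $x_i\partial f/\partial x_i$ have no common zero on $\mathcal{H}_r$. $J_1(f)=\langle x_i\partial f/\partial x_i\rangle:\langle x_1x_2x_3x_4\rangle$ and $J_1(f)_\alpha=J_1(f)\cap S_\alpha$. *)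

theory Defs
  imports "HOL-Analysis.Analysis" "HOL-Library.Poly_Mapping"
begin

text \<open>Monomials x1^e1 x2^e2 x3^e3 x4^e4 are encoded by exponent quadruples (e1,e2,e3,e4);
  elements of the Cox ring S = C[x1,x2,x3,x4] are finitely supported coefficient maps.\<close>

type_synonym mono = "nat \<times> nat \<times> nat \<times> nat"
type_synonym cpoly = "mono \<Rightarrow>\<^sub>0 complex"

text \<open>Classes in Pic(H_r) = Z D1 + Z D2, written as pairs (coefficient of D1, coefficient of D2).\<close>
type_synonym cls = "int \<times> int"

definition mono_deg :: "nat \<Rightarrow> mono \<Rightarrow> cls" where
  "mono_deg r e = (case e of (e1,e2,e3,e4) \<Rightarrow>
      (int e1 + int e3 + int r * int e4, int e2 + int e4))"

definition S_deg :: "nat \<Rightarrow> cls \<Rightarrow> cpoly set" where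
  "S_deg r \<alpha> = {p. \<forall>e \<in> Poly_Mapping.keys p. mono_deg r e = \<alpha>}"

definition K_cls :: "nat \<Rightarrow> cls" where
  "K_cls r = (- (int r + 2), -2)"

definition const :: "complex \<Rightarrow> cpoly" where
  "const c = Poly_Mapping.single 0 c"

definition pscale :: "complex \<Rightarrow> cpoly \<Rightarrow> cpoly" where
  "pscale c p = const c * p"

definition var :: "nat \<Rightarrow> cpoly" where
  "var i = Poly_Mapping.single
      (if i = 1 then (1,0,0,0) else if i = 2 then (0,1,0,0)
       else if i = 3 then (0,0,1,0) else (0,0,0,1)) 1"

definition expo :: "nat \<Rightarrow> mono \<Rightarrow> nat" where
  "expo i e = (case e of (e1,e2,e3,e4) \<Rightarrow>
      (if i = 1 then e1 else if i = 2 then e2 else if i = 3 then e3 else e4))"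

text \<open>The Euler-type derivative x_i * (d f / d x_i): multiplies the coefficient of each
  monomial by its x_i exponent.\<close>
definition xdiff :: "nat \<Rightarrow> cpoly \<Rightarrow> cpoly" where
  "xdiff i f = Poly_Mapping.Abs_poly_mapping (\<lambda>e. of_nat (expo i e) * Poly_Mapping.lookup f e)"

definition peval :: "cpoly \<Rightarrow> (nat \<Rightarrow> complex) \<Rightarrow> complex" where
  "peval p x = (\<Sum>e\<in>Poly_Mapping.keys p. Poly_Mapping.lookup p e *
      (\<Prod>i\<in>{1..4::nat}. x i ^ expo i e))"

text \<open>Points of H_r = (C^4 minus Z)/G with exceptional set Z = V(x1,x3) \<union> V(x2,x4).
  A (quasi-)homogeneous polynomial vanishes at a point of H_r iff it vanishes at one
  (equivalently every) representative in C^4 minus Z.\<close>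
definition outside_Z :: "(nat \<Rightarrow> complex) \<Rightarrow> bool" where
  "outside_Z x \<longleftrightarrow> (x 1 \<noteq> 0 \<or> x 3 \<noteq> 0) \<and> (x 2 \<noteq> 0 \<or> x 4 \<noteq> 0)"

definition nondegenerate :: "cpoly \<Rightarrow> bool" where
  "nondegenerate f \<longleftrightarrow>
     \<not> (\<exists>x. outside_Z x \<and> (\<forall>i\<in>{1..4::nat}. peval (xdiff i f) x = 0))"

text \<open>J_1(f) = < x_i df/dx_i > : < x1 x2 x3 x4 >.\<close>
definition J1 :: "cpoly \<Rightarrow> cpoly set" where
  "J1 f = {g. \<exists>q :: nat \<Rightarrow> cpoly.
      g * (var 1 * var 2 * var 3 * var 4) = (\<Sum>i\<in>{1..4::nat}. q i * xdiff i f)}"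

definition J1_deg :: "nat \<Rightarrow> cpoly \<Rightarrow> cls \<Rightarrow> cpoly set" where
  "J1_deg r f \<alpha> = J1 f \<inter> S_deg r \<alpha>"

text \<open>Intersection numbers on H_r: D1.D1 = 0, D1.D2 = 1, D2.D2 = -r.\<close>
definition inter :: "nat \<Rightarrow> cls \<Rightarrow> cls \<Rightarrow> int" where
  "inter r \<alpha> \<gamma> = fst \<alpha> * snd \<gamma> + snd \<alpha> * fst \<gamma> - int r * snd \<alpha> * snd \<gamma>"

definition Dcls :: "nat \<Rightarrow> nat \<Rightarrow> cls" where
  "Dcls r i = (if i = 1 \<or> i = 3 then (1,0) else if i = 2 then (0,1) else (int r, 1))"

text \<open>Ampleness via the toric Kleiman criterion: positive degree on every
  torus-invariant curve D_1,...,D_4.\<close>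
definition ample :: "nat \<Rightarrow> cls \<Rightarrow> bool" where
  "ample r \<beta> \<longleftrightarrow> (\<forall>i\<in>{1..4::nat}. inter r \<beta> (Dcls r i) > 0)"

lemma const_add: "const (a + b) = const a + const b"
  unfolding const_def by (simp add: Poly_Mapping.single_add)

lemma const_mult: "const (a * b) = const a * const b"
  unfolding const_def by (simp add: Poly_Mapping.mult_single)

lemma vector_space_pscale: "Vector_Spaces.vector_space pscale"
  by unfold_locales
    (simp_all add: pscale_def const_add const_mult distrib_left distrib_right
       mult.assoc, simp add: const_def)


definition cdim :: "cpoly set \<Rightarrow> nat" where
  "cdim A = vector_space.dim pscale A"

end

theory Submission
  imports Defs "Jordan_Normal_Form.Determinant" "HOL-Computational_Algebra.Polynomial_Factorial"
    "HOL-Computational_Algebra.Field_as_Ring" "HOL-Computational_Algebra.Fundamental_Theorem_Algebra"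
begin

lemma prod14: "(\<Prod>i\<in>{1..4::nat}. F i) = F 1 * F 2 * F 3 * F 4"
proof -
  have "{1..4::nat} = {1,2,3,4}" by auto
  then show ?thesis by (simp add: mult.assoc)
qed

lemma expo_simps[simp]:
  "expo 1 (a,b,c,d) = a" "expo (Suc 0) (a,b,c,d) = a" "expo 2 (a,b,c,d) = b" "expo 3 (a,b,c,d) = c" "expo 4 (a,b,c,d) = d"
  by (simp_all add: expo_def)

lemma expo_add: "i \<in> {1..4} \<Longrightarrow> expo i (x + y) = expo i x + expo i y"
  by (cases x; cases y) (auto simp: expo_def add_Pair)

lemma expo_add_all:
  "expo 1 (x + y) = expo 1 x + expo 1 y" "expo (Suc 0) (x + y) = expo (Suc 0) x + expo (Suc 0) y" "expo 2 (x + y) = expo 2 x + expo 2 y"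
  "expo 3 (x + y) = expo 3 x + expo 3 y" "expo 4 (x + y) = expo 4 x + expo 4 y"
  by (simp_all add: expo_add del: One_nat_def)

lemma mono_eqI: "expo 1 x = expo 1 y \<Longrightarrow> expo 2 x = expo 2 y \<Longrightarrow> expo 3 x = expo 3 y
   \<Longrightarrow> expo 4 x = expo 4 y \<Longrightarrow> x = y"
  by (cases x; cases y) (auto simp: expo_def)

lemma mono_deg_expo: "mono_deg r e = (int (expo 1 e) + int (expo 3 e) + int r * int (expo 4 e), int (expo 2 e) + int (expo 4 e))"
  by (cases e) (simp add: mono_deg_def expo_def)

lemma mono_deg_add: "mono_deg r (x + y) = mono_deg r x + mono_deg r y"
  by (simp only: mono_deg_expo expo_add_all add_Pair) (simp add: algebra_simps)

lemma pm_decomp: "(p::cpoly) = (\<Sum>e\<in>Poly_Mapping.keys p. Poly_Mapping.single e (Poly_Mapping.lookup p e))"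
proof (rule poly_mapping_eqI)
  fix k
  show "Poly_Mapping.lookup p k = Poly_Mapping.lookup (\<Sum>e\<in>Poly_Mapping.keys p. Poly_Mapping.single e (Poly_Mapping.lookup p e)) k"
    by (simp add: lookup_sum lookup_single when_def in_keys_iff)
qed

lemma additive_sum:
  fixes L :: "cpoly \<Rightarrow> 'b::cancel_comm_monoid_add"
  assumes add: "\<And>p q. L (p + q) = L p + L q"
  shows "L (\<Sum>a\<in>A. F a) = (\<Sum>a\<in>A. L (F a))"
proof -
  have L0: "L 0 = 0" using add[of 0 0] by (metis add.right_neutral add_left_cancel)
  show ?thesis
  proof (cases "finite A")
    case True then show ?thesis by (induction A rule: finite_induct) (simp_all add: L0 add)
  next
    case False then show ?thesis by (simp add: L0)
  qed
qed

lemma biadditive_eq: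
  fixes B1 B2 :: "cpoly \<Rightarrow> cpoly \<Rightarrow> 'b::cancel_comm_monoid_add"
  assumes a1: "\<And>p q x. B1 (p + q) x = B1 p x + B1 q x"
    and a2: "\<And>p q x. B1 x (p + q) = B1 x p + B1 x q"
    and b1: "\<And>p q x. B2 (p + q) x = B2 p x + B2 q x"
    and b2: "\<And>p q x. B2 x (p + q) = B2 x p + B2 x q"
    and sing: "\<And>a b c d. B1 (Poly_Mapping.single a c) (Poly_Mapping.single b d) = B2 (Poly_Mapping.single a c) (Poly_Mapping.single b d)"
  shows "B1 p q = B2 p q"
proof -
  let ?P = "\<lambda>p. \<Sum>e\<in>Poly_Mapping.keys p. Poly_Mapping.single e (Poly_Mapping.lookup p e)"
  have "B1 p q = B1 (?P p) (?P q)" by (simp flip: pm_decomp)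
  also have "\<dots> = (\<Sum>e\<in>Poly_Mapping.keys p. \<Sum>e'\<in>Poly_Mapping.keys q. B1 (Poly_Mapping.single e (Poly_Mapping.lookup p e)) (Poly_Mapping.single e' (Poly_Mapping.lookup q e')))"
    by (simp add: additive_sum[where L="\<lambda>x. B1 x _", OF a1] additive_sum[where L="\<lambda>x. B1 _ x", OF a2] sum.swap[of _ "Poly_Mapping.keys q"])
  also have "\<dots> = (\<Sum>e\<in>Poly_Mapping.keys p. \<Sum>e'\<in>Poly_Mapping.keys q. B2 (Poly_Mapping.single e (Poly_Mapping.lookup p e)) (Poly_Mapping.single e' (Poly_Mapping.lookup q e')))"
    by (simp add: sing)
  also have "\<dots> = B2 (?P p) (?P q)"
    by (simp add: additive_sum[where L="\<lambda>x. B2 x _", OF b1] additive_sum[where L="\<lambda>x. B2 _ x", OF b2] sum.swap[of _ "Poly_Mapping.keys q"])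
  finally show ?thesis by (simp flip: pm_decomp)
qed

lemma mult_hom_by_singles:
  fixes L :: "cpoly \<Rightarrow> 'b::comm_ring_1"
  assumes add: "\<And>p q. L (p + q) = L p + L q"
    and sing: "\<And>a b c d. L (Poly_Mapping.single a c * Poly_Mapping.single b d) = L (Poly_Mapping.single a c) * L (Poly_Mapping.single b d)"
  shows "L (p * q) = L p * L q"
  by (rule biadditive_eq[of "\<lambda>p q. L (p * q)" "\<lambda>p q. L p * L q"])
     (simp_all add: add distrib_left distrib_right sing)

lemma lookup_xdiff: "Poly_Mapping.lookup (xdiff i f) e = of_nat (expo i e) * Poly_Mapping.lookup f e"
proof -
  have "finite {e. of_nat (expo i e) * Poly_Mapping.lookup f e \<noteq> (0::complex)}"
    by (rule finite_subset[of _ "Poly_Mapping.keys f"]) (auto simp: in_keys_iff)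
  then show ?thesis unfolding xdiff_def by (simp add: Abs_poly_mapping_inverse)
qed

lemma xdiff_add: "xdiff i (p + q) = xdiff i p + xdiff i q"
  by (rule poly_mapping_eqI) (simp add: lookup_xdiff lookup_add distrib_left)

lemma xdiff_single: "xdiff i (Poly_Mapping.single e c) = Poly_Mapping.single e (of_nat (expo i e) * c)"
  by (rule poly_mapping_eqI) (simp add: lookup_xdiff lookup_single when_def)

lemma keys_xdiff: "Poly_Mapping.keys (xdiff i p) \<subseteq> Poly_Mapping.keys p"
  by (auto simp: in_keys_iff lookup_xdiff)

lemma xdiff_mult: "i \<in> {1..4} \<Longrightarrow> xdiff i (p * q) = xdiff i p * q + p * xdiff i q"
  apply (rule biadditive_eq[of "\<lambda>p q. xdiff i (p * q)" "\<lambda>p q. xdiff i p * q + p * xdiff i q"])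
  apply (simp_all add: xdiff_add distrib_left distrib_right)
  apply (simp add: mult_single xdiff_single expo_add algebra_simps single_add)
  done

definition mon :: "(nat \<Rightarrow> complex) \<Rightarrow> mono \<Rightarrow> complex" where
  "mon x e = (\<Prod>i\<in>{1..4::nat}. x i ^ expo i e)"

lemma peval_mon: "peval p x = (\<Sum>e\<in>Poly_Mapping.keys p. Poly_Mapping.lookup p e * mon x e)"
  by (simp add: peval_def mon_def)

lemma peval_add: "peval (p + q) x = peval p x + peval q x"
  unfolding peval_mon
  by (rule setsum_keys_plus_distrib) (simp_all add: distrib_right)

lemma peval_single: "peval (Poly_Mapping.single e c) x = c * mon x e"
  by (simp add: peval_mon)

lemma mon_add: "mon x (a + b) = mon x a * mon x b"
  unfolding mon_def prod14 by (simp add: expo_add_all power_add)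

lemma peval_mult: "peval (p * q) x = peval p x * peval q x"
  by (rule mult_hom_by_singles) (simp_all add: peval_add mult_single peval_single mon_add)

lemma peval_zero[simp]: "peval 0 x = 0" by (simp add: peval_def)

declare One_nat_def [simp del]

lemma expo_zero[simp]: "expo i 0 = 0"
  by (simp add: expo_def zero_prod_def)

lemma S_deg_keys: "p \<in> S_deg r \<alpha> \<Longrightarrow> e \<in> Poly_Mapping.keys p \<Longrightarrow> mono_deg r e = \<alpha>"
  by (simp add: S_deg_def)

lemma mono_unique:
  assumes "mono_deg r e = mono_deg r e'" "expo 1 e = expo 1 e'" "expo 2 e = expo 2 e'"
  shows "e = e'"
proof -
  from assms(1) have "expo 4 e = expo 4 e'" using assms(3) by (simp add: mono_deg_expo)
  moreover with assms(1,2) have "expo 3 e = expo 3 e'" by (simp add: mono_deg_expo)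
  ultimately show ?thesis using assms(2,3) by (intro mono_eqI) auto
qed

lemma S_deg_zero[simp]: "0 \<in> S_deg r \<alpha>" by (simp add: S_deg_def)

lemma S_deg_add: "p \<in> S_deg r \<alpha> \<Longrightarrow> q \<in> S_deg r \<alpha> \<Longrightarrow> p + q \<in> S_deg r \<alpha>"
  using keys_add[of p q] by (auto simp: S_deg_def)

lemma S_deg_uminus: "p \<in> S_deg r \<alpha> \<Longrightarrow> - p \<in> S_deg r \<alpha>"
  by (auto simp: S_deg_def)

lemma S_deg_mult: assumes "p \<in> S_deg r \<alpha>" "q \<in> S_deg r \<gamma>" shows "p * q \<in> S_deg r (\<alpha> + \<gamma>)"
  unfolding S_deg_def mem_Collect_eq
proof
  fix e assume "e \<in> Poly_Mapping.keys (p * q)"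
  with keys_mult[of p q] obtain a b where "e = a + b" "a \<in> Poly_Mapping.keys p" "b \<in> Poly_Mapping.keys q" by blast
  with assms show "mono_deg r e = \<alpha> + \<gamma>" by (simp add: S_deg_def mono_deg_add)
qed

lemma const_S_deg: "const c \<in> S_deg r (0,0)"
  by (simp add: S_deg_def const_def mono_deg_expo)

lemma pscale_S_deg: "p \<in> S_deg r \<alpha> \<Longrightarrow> pscale c p \<in> S_deg r \<alpha>"
proof -
  assume "p \<in> S_deg r \<alpha>"
  from S_deg_mult[OF const_S_deg this, of c] show ?thesis by (cases \<alpha>) (simp add: pscale_def add_Pair)
qed

lemma var3_S_deg: "var 3 \<in> S_deg r (1,0)"
  by (simp add: S_deg_def var_def mono_deg_def)

lemma var3_pow_S_deg: "var 3 ^ d \<in> S_deg r (int d, 0)"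
proof (induction d)
  case 0 then show ?case by (simp add: S_deg_def mono_deg_expo)
next
  case (Suc d)
  have "var 3 * var 3 ^ d \<in> S_deg r ((1,0) + (int d, 0))" by (rule S_deg_mult[OF var3_S_deg Suc])
  then show ?case by (simp add: add_Pair add.commute)
qed

lemma xdiff_S_deg: "p \<in> S_deg r \<alpha> \<Longrightarrow> xdiff i p \<in> S_deg r \<alpha>"
  using keys_xdiff[of i p] by (auto simp: S_deg_def)

definition Dc :: "complex \<Rightarrow> cpoly \<Rightarrow> complex poly poly" where
  "Dc c3 p = (\<Sum>e\<in>Poly_Mapping.keys p.
      monom (monom (Poly_Mapping.lookup p e * c3 ^ expo 3 e) (expo 1 e)) (expo 2 e))"

lemma Dc_add: "Dc c3 (p + q) = Dc c3 p + Dc c3 q"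
  unfolding Dc_def
  by (rule setsum_keys_plus_distrib) (simp_all add: distrib_right add_monom[symmetric])

lemma Dc_single: "Dc c3 (Poly_Mapping.single e c) = monom (monom (c * c3 ^ expo 3 e) (expo 1 e)) (expo 2 e)"
  by (simp add: Dc_def)

lemma Dc_mult: "Dc c3 (p * q) = Dc c3 p * Dc c3 q"
  by (rule mult_hom_by_singles)
     (simp_all add: Dc_add mult_single Dc_single mult_monom expo_add_all power_add mult_ac)

lemma Dc_zero[simp]: "Dc c3 0 = 0" by (simp add: Dc_def)

lemma Dc_uminus: "Dc c3 (- p) = - Dc c3 p"
proof -
  have "Dc c3 p + Dc c3 (-p) = 0" using Dc_add[of c3 p "-p"] by simp
  then show ?thesis by (simp add: add_eq_0_iff)
qed

lemma Dc_const: "Dc c3 (const z) = [:[:z:]:]"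
  by (simp add: const_def Dc_single monom_0)

lemma Dc_var3: "Dc c3 (var 3) = [:[:c3:]:]"
  by (simp add: var_def Dc_single monom_0)

lemma Dc_pow: "Dc c3 (p ^ n) = Dc c3 p ^ n"
  by (induction n) (simp_all add: Dc_mult Dc_const[of _ 1, unfolded const_def] pCons_one flip: single_one)

lemma coeff_Dc: "coeff (Dc c3 p) j = (\<Sum>e\<in>{e\<in>Poly_Mapping.keys p. expo 2 e = j}.
      monom (Poly_Mapping.lookup p e * c3 ^ expo 3 e) (expo 1 e))"
  unfolding Dc_def coeff_sum coeff_monom
  by (simp add: sum.inter_filter)

lemma coeff_coeff_Dc: "coeff (coeff (Dc c3 p) j) i = (\<Sum>e\<in>{e\<in>Poly_Mapping.keys p. expo 1 e = i \<and> expo 2 e = j}.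
      Poly_Mapping.lookup p e * c3 ^ expo 3 e)"
  unfolding coeff_Dc coeff_sum coeff_monom
  by (simp add: sum.inter_filter, rule sum.cong, auto)

declare One_nat_def [simp del]

lemma coeff_coeff_Dc_hom:
  assumes "p \<in> S_deg r \<alpha>" "mono_deg r e = \<alpha>"
  shows "coeff (coeff (Dc c3 p) (expo 2 e)) (expo 1 e) = Poly_Mapping.lookup p e * c3 ^ expo 3 e"
proof -
  have uniq: "e' = e" if "e' \<in> Poly_Mapping.keys p" "expo 1 e' = expo 1 e" "expo 2 e' = expo 2 e" for e'
    using that assms S_deg_keys[OF assms(1) that(1)] by (intro mono_unique[of r]) auto
  have "{e'\<in>Poly_Mapping.keys p. expo 1 e' = expo 1 e \<and> expo 2 e' = expo 2 e} = {e} \<inter> Poly_Mapping.keys p"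
    using uniq by blast
  then have "coeff (coeff (Dc c3 p) (expo 2 e)) (expo 1 e) = (\<Sum>e'\<in>{e} \<inter> Poly_Mapping.keys p. Poly_Mapping.lookup p e' * c3 ^ expo 3 e')"
    by (simp only: coeff_coeff_Dc)
  also have "\<dots> = Poly_Mapping.lookup p e * c3 ^ expo 3 e"
    by (cases "e \<in> Poly_Mapping.keys p") (simp_all add: in_keys_iff)
  finally show ?thesis .
qed

lemma coeff_coeff_Dc_nz:
  "coeff (coeff (Dc c3 p) j) i \<noteq> 0 \<Longrightarrow> \<exists>e\<in>Poly_Mapping.keys p. expo 1 e = i \<and> expo 2 e = j"
  unfolding coeff_coeff_Dc by (metis (mono_tags, lifting) empty_Collect_eq sum.empty)

lemma coeff_Dc_nz:
  "coeff (Dc c3 p) j \<noteq> 0 \<Longrightarrow> \<exists>e\<in>Poly_Mapping.keys p. expo 2 e = j"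
  unfolding coeff_Dc by (metis (mono_tags, lifting) empty_Collect_eq sum.empty)

lemma Dc_inj:
  assumes "p \<in> S_deg r \<alpha>" "q \<in> S_deg r \<alpha>" "Dc 1 p = Dc 1 q"
  shows "p = q"
proof (rule poly_mapping_eqI)
  fix e
  show "Poly_Mapping.lookup p e = Poly_Mapping.lookup q e"
  proof (cases "mono_deg r e = \<alpha>")
    case True
    from coeff_coeff_Dc_hom[OF assms(1) True, of 1] coeff_coeff_Dc_hom[OF assms(2) True, of 1] assms(3)
    show ?thesis by simp
  next
    case False
    then have "e \<notin> Poly_Mapping.keys p" "e \<notin> Poly_Mapping.keys q" using assms S_deg_keys by blast+
    then show ?thesis by (simp add: in_keys_iff)
  qed
qed

lemma deg_Dc_le: "(\<And>e. e \<in> Poly_Mapping.keys p \<Longrightarrow> expo 2 e \<le> n) \<Longrightarrow> degree (Dc c3 p) \<le> n"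
  by (rule degree_le) (metis coeff_Dc_nz not_le)

lemma deg_coeff_Dc_le: "(\<And>e. e \<in> Poly_Mapping.keys p \<Longrightarrow> expo 1 e \<le> n) \<Longrightarrow> degree (coeff (Dc c3 p) j) \<le> n"
  by (rule degree_le) (metis coeff_coeff_Dc_nz not_le)

definition Ev :: "complex \<Rightarrow> complex \<Rightarrow> cpoly \<Rightarrow> complex poly" where
  "Ev s t p = (\<Sum>e\<in>Poly_Mapping.keys p. monom (Poly_Mapping.lookup p e * s ^ expo 1 e * t ^ expo 3 e) (expo 2 e))"

definition pt :: "complex \<Rightarrow> complex \<Rightarrow> complex \<Rightarrow> complex \<Rightarrow> nat \<Rightarrow> complex" where
  "pt a b c d i = (if i = 1 then a else if i = 2 then b else if i = 3 then c else d)"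

lemma mon_pt: "mon (pt a b c d) e = a ^ expo 1 e * b ^ expo 2 e * c ^ expo 3 e * d ^ expo 4 e"
  unfolding mon_def prod14 by (simp add: pt_def)

lemma poly_Ev: "poly (Ev s t p) X = peval p (pt s X t 1)"
  unfolding Ev_def peval_mon mon_pt poly_sum poly_monom by (simp add: mult_ac)

lemma coeff_Ev: "coeff (Ev s t p) j = (\<Sum>e\<in>{e\<in>Poly_Mapping.keys p. expo 2 e = j}.
     Poly_Mapping.lookup p e * s ^ expo 1 e * t ^ expo 3 e)"
  unfolding Ev_def coeff_sum coeff_monom by (simp add: sum.inter_filter)

lemma S_deg_expo2:
  assumes "p \<in> S_deg r (P, int q)" "e \<in> Poly_Mapping.keys p"
  shows "expo 2 e + expo 4 e = q"
  using S_deg_keys[OF assms] by (simp add: mono_deg_expo)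

lemma S_deg_expo1:
  assumes "p \<in> S_deg r (int P, Q)" "e \<in> Poly_Mapping.keys p"
  shows "expo 1 e + expo 3 e + r * expo 4 e = P"
proof -
  from S_deg_keys[OF assms] have "int (expo 1 e) + int (expo 3 e) + int r * int (expo 4 e) = int P"
    by (simp add: mono_deg_expo)
  then have "int (expo 1 e + expo 3 e + r * expo 4 e) = int P" by simp
  then show ?thesis by (simp only: of_nat_eq_iff)
qed

lemma deg_Ev: assumes "p \<in> S_deg r (P, int q)" shows "degree (Ev s t p) \<le> q"
proof (rule degree_le, intro allI impI)
  fix j assume "q < j"
  then have E: "{e\<in>Poly_Mapping.keys p. expo 2 e = j} = {}" using S_deg_expo2[OF assms] by fastforce
  show "coeff (Ev s t p) j = 0" unfolding coeff_Ev E by simp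
qed

lemma peval_inf:
  assumes "p \<in> S_deg r (P, int q)"
  shows "peval p (pt s 1 t 0) = coeff (Ev s t p) q"
proof -
  have "peval p (pt s 1 t 0) = (\<Sum>e\<in>Poly_Mapping.keys p. if expo 2 e = q then Poly_Mapping.lookup p e * s ^ expo 1 e * t ^ expo 3 e else 0)"
    unfolding peval_mon mon_pt
  proof (rule sum.cong)
    fix e assume "e \<in> Poly_Mapping.keys p"
    from S_deg_expo2[OF assms this] have "expo 4 e = 0 \<longleftrightarrow> expo 2 e = q" by auto
    then show "Poly_Mapping.lookup p e * (s ^ expo 1 e * 1 ^ expo 2 e * t ^ expo 3 e * 0 ^ expo 4 e) =
        (if expo 2 e = q then Poly_Mapping.lookup p e * s ^ expo 1 e * t ^ expo 3 e else 0)"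
      by (auto simp: power_0_left)
  qed simp
  then show ?thesis by (simp add: coeff_Ev sum.inter_filter)
qed

lemma coeff_Ev_scale:
  assumes "p \<in> S_deg r (int P, int q)"
  shows "l ^ (r * (q - j)) * coeff (Ev (l * s) (l * t) p) j = l ^ P * coeff (Ev s t p) j"
  unfolding coeff_Ev sum_distrib_left
proof (rule sum.cong)
  fix e assume "e \<in> {e \<in> Poly_Mapping.keys p. expo 2 e = j}"
  then have e: "e \<in> Poly_Mapping.keys p" "expo 2 e = j" by auto
  from S_deg_expo2[OF assms e(1)] e(2) have "expo 4 e = q - j" by auto
  with S_deg_expo1[OF assms e(1)] have "r * (q - j) + expo 1 e + expo 3 e = P" by simp
  then have "l ^ P = l ^ (r * (q - j)) * l ^ expo 1 e * l ^ expo 3 e" by (metis power_add)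
  then show "l ^ (r * (q - j)) * (Poly_Mapping.lookup p e * (l * s) ^ expo 1 e * (l * t) ^ expo 3 e) =
      l ^ P * (Poly_Mapping.lookup p e * s ^ expo 1 e * t ^ expo 3 e)"
    by (simp add: power_mult_distrib mult_ac)
qed simp

declare One_nat_def [simp del]

definition sylm :: "nat \<Rightarrow> nat \<Rightarrow> complex poly \<Rightarrow> complex poly \<Rightarrow> complex mat" where
  "sylm m n P Q = Matrix.mat (m+n) (m+n) (\<lambda>(i,c). if i < n then (if i \<le> c then coeff P (c - i) else 0)
      else (if i - n \<le> c then coeff Q (c - (i - n)) else 0))"

lemma sylm_carrier: "sylm m n P Q \<in> carrier_mat (m+n) (m+n)"
  by (simp add: sylm_def)

lemma sylm_index: "i < m + n \<Longrightarrow> c < m + n \<Longrightarrow> sylm m n P Q $$ (i,c) =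
   (if i < n then (if i \<le> c then coeff P (c - i) else 0) else (if i - n \<le> c then coeff Q (c - (i - n)) else 0))"
  by (simp add: sylm_def)

lemma sum_split_add: "(\<Sum>i<n+m. f i) = (\<Sum>i<n. f i) + (\<Sum>i<m. f (n+i))" for n m :: nat
  by (induction m) (simp_all add: add_ac)

lemma no_common_root_coprime:
  fixes P Q :: "complex poly"
  assumes "P \<noteq> 0" "\<And>x. \<not> (poly P x = 0 \<and> poly Q x = 0)"
  shows "coprime P Q"
proof (rule ccontr)
  assume nc: "\<not> coprime P Q"
  let ?G = "gcd P Q"
  have G0: "?G \<noteq> 0" using assms(1) by simp
  have "\<not> is_unit ?G" using nc is_unit_gcd by blast
  then have "degree ?G \<noteq> 0" using is_unit_iff_degree[OF G0] by simp
  then have "\<not> constant (poly ?G)" by (simp add: constant_degree)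
  then obtain z where z: "poly ?G z = 0" using fundamental_theorem_of_algebra by blast
  have "poly P z = 0" using z by (metis dvd_mult_div_cancel gcd_dvd1 mult_eq_0_iff poly_mult)
  moreover have "poly Q z = 0" using z by (metis dvd_mult_div_cancel gcd_dvd2 mult_eq_0_iff poly_mult)
  ultimately show False using assms(2) by blast
qed

lemma bezout_zero_aux:
  fixes P Q A B :: "complex poly"
  assumes "P \<noteq> 0" "coprime P Q" "A * P + B * Q = 0" "\<And>k. k \<ge> degree P \<Longrightarrow> coeff B k = 0"
  shows "A = 0 \<and> B = 0"
proof -
  have "B * Q = P * (- A)" using assms(3) by (simp add: algebra_simps add_eq_0_iff)
  then have "P dvd B * Q" by simp
  then have dvd: "P dvd B" using assms(2) coprime_dvd_mult_left_iff by blast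
  have B0: "B = 0"
  proof (rule ccontr)
    assume "B \<noteq> 0"
    then have "degree P \<le> degree B" using dvd dvd_imp_degree_le by blast
    moreover have "coeff B (degree B) \<noteq> 0" using \<open>B \<noteq> 0\<close> by simp
    ultimately show False using assms(4) by blast
  qed
  then have "A * P = 0" using assms(3) by simp
  then have "A = 0" using assms(1) by simp
  with B0 show ?thesis by simp
qed

lemma sylm_zero:
  fixes P Q :: "complex poly"
  assumes dP: "degree P \<le> m" and dQ: "degree Q \<le> n" and det0: "Determinant.det (sylm m n P Q) = 0"
  shows "(coeff P m = 0 \<and> coeff Q n = 0) \<or> (\<exists>x. poly P x = 0 \<and> poly Q x = 0)"
proof -
  let ?L = "m + n"
  let ?M = "sylm m n P Q"
  have MT: "?M\<^sup>T \<in> carrier_mat ?L ?L" using sylm_carrier by simp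
  have "Determinant.det (?M\<^sup>T) = 0" using det0 det_transpose[OF sylm_carrier] by simp
  then obtain v where v: "v \<in> carrier_vec ?L" "v \<noteq> 0\<^sub>v ?L" "?M\<^sup>T *\<^sub>v v = 0\<^sub>v ?L"
    using det_0_iff_vec_prod_zero_field[OF MT] by blast
  have col: "(\<Sum>i<?L. ?M $$ (i,c) * Matrix.vec_index v i) = 0" if c: "c < ?L" for c
  proof -
    have "Matrix.vec_index (?M\<^sup>T *\<^sub>v v) c = 0" using v(3) c by simp
    moreover have "Matrix.vec_index (?M\<^sup>T *\<^sub>v v) c = (\<Sum>i<?L. ?M $$ (i,c) * Matrix.vec_index v i)"
      using c v(1) by (simp add: Matrix.scalar_prod_def sylm_def lessThan_atLeast0)
    ultimately show ?thesis by simp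
  qed
  define A where "A = (\<Sum>i<n. monom (Matrix.vec_index v i) i)"
  define B where "B = (\<Sum>i<m. monom (Matrix.vec_index v (n+i)) i)"
  have cA: "coeff A k = (if k < n then Matrix.vec_index v k else 0)" for k
    unfolding A_def coeff_sum coeff_monom by (auto simp: sum.delta)
  have cB: "coeff B k = (if k < m then Matrix.vec_index v (n+k) else 0)" for k
    unfolding B_def coeff_sum coeff_monom by (auto simp: sum.delta)
  have cAP: "coeff (A * P) c = (\<Sum>i<n. Matrix.vec_index v i * (if i \<le> c then coeff P (c - i) else 0))" for c
    unfolding A_def sum_distrib_right coeff_sum coeff_monom_mult by (intro sum.cong) auto
  have cBQ: "coeff (B * Q) c = (\<Sum>i<m. Matrix.vec_index v (n+i) * (if i \<le> c then coeff Q (c - i) else 0))" for c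
    unfolding B_def sum_distrib_right coeff_sum coeff_monom_mult by (intro sum.cong) auto
  have ABPQ: "A * P + B * Q = 0"
  proof (rule poly_eqI)
    fix c
    show "coeff (A * P + B * Q) c = coeff 0 c"
    proof (cases "c < ?L")
      case True
      have "0 = (\<Sum>i<n+m. ?M $$ (i,c) * Matrix.vec_index v i)" using col[OF True] by (simp add: add.commute)
      also have "\<dots> = (\<Sum>i<n. ?M $$ (i,c) * Matrix.vec_index v i) + (\<Sum>i<m. ?M $$ (n+i,c) * Matrix.vec_index v (n+i))"
        by (rule sum_split_add)
      also have "(\<Sum>i<n. ?M $$ (i,c) * Matrix.vec_index v i) = coeff (A * P) c"
        unfolding cAP by (rule sum.cong) (use True in \<open>auto simp: sylm_index\<close>)
      also have "(\<Sum>i<m. ?M $$ (n+i,c) * Matrix.vec_index v (n+i)) = coeff (B * Q) c"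
        unfolding cBQ by (rule sum.cong) (use True in \<open>auto simp: sylm_index\<close>)
      finally show ?thesis by simp
    next
      case False
      have "coeff (A * P) c = 0" unfolding cAP
      proof (intro sum.neutral ballI)
        fix i assume "i \<in> {..<n}"
        then have "c - i > m" using False by auto
        then have "coeff P (c - i) = 0" using dP by (simp add: coeff_eq_0)
        then show "Matrix.vec_index v i * (if i \<le> c then coeff P (c - i) else 0) = 0" by simp
      qed
      moreover have "coeff (B * Q) c = 0" unfolding cBQ
      proof (intro sum.neutral ballI)
        fix i assume "i \<in> {..<m}"
        then have "c - i > n" using False by auto
        then have "coeff Q (c - i) = 0" using dQ by (simp add: coeff_eq_0)
        then show "Matrix.vec_index v (n+i) * (if i \<le> c then coeff Q (c - i) else 0) = 0" by simp
      qed
      ultimately show ?thesis by simp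
    qed
  qed
  have AB: "A \<noteq> 0 \<or> B \<noteq> 0"
  proof -
    obtain i where i: "i < ?L" "Matrix.vec_index v i \<noteq> 0"
      using v(1,2) by (metis carrier_vecD eq_vecI index_zero_vec(1) index_zero_vec(2))
    show ?thesis
    proof (cases "i < n")
      case True then show ?thesis using cA[of i] i by auto
    next
      case False then have "coeff B (i - n) \<noteq> 0" using cB[of "i - n"] i by auto
      then show ?thesis by auto
    qed
  qed
  show ?thesis
  proof (rule ccontr)
    assume H: "\<not> ?thesis"
    then have nr: "\<And>x. \<not> (poly P x = 0 \<and> poly Q x = 0)" by blast
    show False
    proof (cases "coeff P m = 0")
      case False
      then have "degree P = m" using le_antisym[OF dP le_degree[OF False]] by simp
      moreover have "P \<noteq> 0" using False by auto
      ultimately have "A = 0 \<and> B = 0"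
        using bezout_zero_aux[of P Q A B] no_common_root_coprime[OF _ nr] ABPQ cB by auto
      then show False using AB by simp
    next
      case True
      then have cQ: "coeff Q n \<noteq> 0" using H by blast
      then have "degree Q = n" using le_antisym[OF dQ le_degree[OF cQ]] by simp
      moreover have "Q \<noteq> 0" using cQ by auto
      moreover have "\<And>x. \<not> (poly Q x = 0 \<and> poly P x = 0)" using nr by blast
      ultimately have "B = 0 \<and> A = 0"
        using bezout_zero_aux[of Q P B A] no_common_root_coprime[of Q P] ABPQ cA by (auto simp: add.commute)
      then show False using AB by simp
    qed
  qed
qed

declare One_nat_def [simp del]

definition Phi :: "cpoly \<Rightarrow> cpoly \<Rightarrow> nat \<Rightarrow> nat \<Rightarrow> complex \<Rightarrow> complex \<Rightarrow> complex" where
  "Phi g k q q' s t = Determinant.det (sylm q q' (Ev s t g) (Ev s t k))"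

lemma pt_simps[simp]: "pt a b c d 1 = a" "pt a b c d 2 = b" "pt a b c d 3 = c" "pt a b c d 4 = d"
  by (simp_all add: pt_def)

lemma Phi_zero_point:
  assumes g: "g \<in> S_deg r (int p, int q)" and k: "k \<in> S_deg r (int p', int q')"
    and st: "s \<noteq> 0 \<or> t \<noteq> 0" and z: "Phi g k q q' s t = 0"
  shows "\<exists>x. outside_Z x \<and> peval g x = 0 \<and> peval k x = 0"
proof -
  from sylm_zero[OF deg_Ev[OF g] deg_Ev[OF k] z[unfolded Phi_def]]
  show ?thesis
  proof
    assume A: "coeff (Ev s t g) q = 0 \<and> coeff (Ev s t k) q' = 0"
    have "outside_Z (pt s 1 t 0)" using st by (simp add: outside_Z_def)
    moreover have "peval g (pt s 1 t 0) = 0" using peval_inf[OF g] A by simp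
    moreover have "peval k (pt s 1 t 0) = 0" using peval_inf[OF k] A by simp
    ultimately show ?thesis by blast
  next
    assume "\<exists>x. poly (Ev s t g) x = 0 \<and> poly (Ev s t k) x = 0"
    then obtain X where X: "poly (Ev s t g) X = 0" "poly (Ev s t k) X = 0" by blast
    have "outside_Z (pt s X t 1)" using st by (simp add: outside_Z_def)
    with X show ?thesis unfolding poly_Ev by blast
  qed
qed

lemma entry_scale:
  assumes g: "g \<in> S_deg r (int p, int q)" and k: "k \<in> S_deg r (int p', int q')"
    and i: "i < q + q'" and c: "c < q + q'"
  shows "l ^ (if i < q' then r * (q + i) else r * (q' + (i - q'))) * sylm q q' (Ev (l * s) (l * t) g) (Ev (l * s) (l * t) k) $$ (i,c)
       = l ^ ((if i < q' then p else p') + r * c) * sylm q q' (Ev s t g) (Ev s t k) $$ (i,c)"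
proof (cases "i < q'")
  case True
  show ?thesis
  proof (cases "i \<le> c")
    case ic: True
    show ?thesis
    proof (cases "c - i \<le> q")
      case True
      have e0: "q + i = (q - (c - i)) + c" using True ic by linarith
      have e: "r * (q + i) = r * (q - (c - i)) + r * c" using e0 by (metis distrib_left)
      have "l ^ (r * (q + i)) * coeff (Ev (l * s) (l * t) g) (c - i) = l ^ (r * c) * (l ^ (r * (q - (c - i))) * coeff (Ev (l * s) (l * t) g) (c - i))"
        by (simp add: e power_add mult_ac)
      also have "\<dots> = l ^ (p + r * c) * coeff (Ev s t g) (c - i)"
        by (simp add: coeff_Ev_scale[OF g] power_add mult_ac)
      finally show ?thesis using \<open>i < q'\<close> ic i c by (simp add: sylm_index)
    next
      case False
      then have "coeff (Ev (l * s) (l * t) g) (c - i) = 0" "coeff (Ev s t g) (c - i) = 0"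
        using deg_Ev[OF g, of "l * s" "l * t"] deg_Ev[OF g, of s t] by (auto intro!: coeff_eq_0)
      then show ?thesis using \<open>i < q'\<close> ic i c by (simp add: sylm_index)
    qed
  next
    case False then show ?thesis using \<open>i < q'\<close> i c by (simp add: sylm_index)
  qed
next
  case False
  define i' where "i' = i - q'"
  have ii: "i - q' = i'" by (simp add: i'_def)
  show ?thesis
  proof (cases "i' \<le> c")
    case ic: True
    show ?thesis
    proof (cases "c - i' \<le> q'")
      case True
      have e0: "q' + i' = (q' - (c - i')) + c" using True ic by linarith
      have e: "r * (q' + i') = r * (q' - (c - i')) + r * c" using e0 by (metis distrib_left)
      have "l ^ (r * (q' + i')) * coeff (Ev (l * s) (l * t) k) (c - i') = l ^ (r * c) * (l ^ (r * (q' - (c - i'))) * coeff (Ev (l * s) (l * t) k) (c - i'))"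
        by (simp add: e power_add mult_ac)
      also have "\<dots> = l ^ (p' + r * c) * coeff (Ev s t k) (c - i')"
        by (simp add: coeff_Ev_scale[OF k] power_add mult_ac)
      finally show ?thesis using False ic i c by (simp add: sylm_index ii)
    next
      case F2: False
      then have "coeff (Ev (l * s) (l * t) k) (c - i') = 0" "coeff (Ev s t k) (c - i') = 0"
        using deg_Ev[OF k, of "l * s" "l * t"] deg_Ev[OF k, of s t] by (auto intro!: coeff_eq_0)
      then show ?thesis using False ic i c by (simp add: sylm_index ii)
    qed
  next
    case F3: False then show ?thesis using False i c by (simp add: sylm_index ii)
  qed
qed

lemma det_expand:
  assumes "A \<in> carrier_mat L L"
  shows "Determinant.det A = (\<Sum>\<sigma>\<in>{\<sigma>. \<sigma> permutes {0..<L}}. of_int (sign \<sigma>) * (\<Prod>i\<in>{0..<L}. A $$ (i, \<sigma> i)))"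
  using assms by (simp add: Determinant.det_def)

lemma Phi_scale:
  assumes g: "g \<in> S_deg r (int p, int q)" and k: "k \<in> S_deg r (int p', int q')" and l: "l \<noteq> 0"
  shows "l ^ (r * q * q') * Phi g k q q' (l * s) (l * t) = l ^ (q' * p + q * p') * Phi g k q q' s t"
proof -
  let ?L = "q + q'"
  let ?Ml = "sylm q q' (Ev (l * s) (l * t) g) (Ev (l * s) (l * t) k)"
  let ?M = "sylm q q' (Ev s t g) (Ev s t k)"
  define wl where "wl i = (if i < q' then r * (q + i) else r * (q' + (i - q')))" for i
  define pr where "pr i = (if i < q' then p else p')" for i
  define W where "W = (\<Sum>i\<in>{0..<?L}. wl i)"
  define PR where "PR = (\<Sum>i\<in>{0..<?L}. pr i)"
  define S where "S = (\<Sum>i\<in>{0..<?L}. i)"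
  have es: "l ^ wl i * ?Ml $$ (i,c) = l ^ (pr i + r * c) * ?M $$ (i,c)" if "i < ?L" "c < ?L" for i c
    using entry_scale[OF g k that, of l s t] by (simp add: wl_def pr_def)
  have perm: "l ^ W * (\<Prod>i\<in>{0..<?L}. ?Ml $$ (i, \<sigma> i)) = l ^ (PR + r * S) * (\<Prod>i\<in>{0..<?L}. ?M $$ (i, \<sigma> i))"
    if \<sigma>: "\<sigma> permutes {0..<?L}" for \<sigma>
  proof -
    have \<sigma>L: "\<sigma> i < ?L" if "i < ?L" for i using permutes_in_image[OF \<sigma>] that by auto
    have sS: "(\<Sum>i\<in>{0..<?L}. \<sigma> i) = S"
      unfolding S_def by (rule sum.reindex_bij_betw[OF permutes_imp_bij[OF \<sigma>]])
    have "l ^ W * (\<Prod>i\<in>{0..<?L}. ?Ml $$ (i, \<sigma> i)) = (\<Prod>i\<in>{0..<?L}. l ^ wl i * ?Ml $$ (i, \<sigma> i))"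
      unfolding W_def power_sum prod.distrib ..
    also have "\<dots> = (\<Prod>i\<in>{0..<?L}. l ^ pr i * l ^ (r * \<sigma> i) * ?M $$ (i, \<sigma> i))"
      by (rule prod.cong) (simp_all add: es \<sigma>L power_add)
    also have "\<dots> = l ^ PR * l ^ (r * (\<Sum>i\<in>{0..<?L}. \<sigma> i)) * (\<Prod>i\<in>{0..<?L}. ?M $$ (i, \<sigma> i))"
      unfolding PR_def power_sum prod.distrib sum_distrib_left ..
    finally show ?thesis by (simp add: sS power_add)
  qed
  have eq1: "l ^ W * Phi g k q q' (l * s) (l * t) = l ^ (PR + r * S) * Phi g k q q' s t"
    unfolding Phi_def det_expand[OF sylm_carrier] sum_distrib_left
  proof (rule sum.cong[OF refl])
    fix \<sigma> assume "\<sigma> \<in> {\<sigma>. \<sigma> permutes {0..<?L}}"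
    then have "\<sigma> permutes {0..<?L}" by simp
    then have "l ^ W * (\<Prod>i\<in>{0..<?L}. ?Ml $$ (i, \<sigma> i)) = l ^ (PR + r * S) * (\<Prod>i\<in>{0..<?L}. ?M $$ (i, \<sigma> i))"
      by (rule perm)
    then show "l ^ W * (of_int (sign \<sigma>) * (\<Prod>i\<in>{0..<?L}. ?Ml $$ (i, \<sigma> i))) = l ^ (PR + r * S) * (of_int (sign \<sigma>) * (\<Prod>i\<in>{0..<?L}. ?M $$ (i, \<sigma> i)))"
      by (simp only: mult.left_commute[of "l ^ W"] mult.left_commute[of "l ^ (PR + r * S)"])
  qed
  have W: "W = r * q * q' + r * S"
  proof -
    have w: "W = (\<Sum>i<q'. r * (q + i)) + (\<Sum>i<q. r * (q' + i))"
      unfolding W_def lessThan_atLeast0[symmetric] add.commute[of q q'] sum_split_add by (simp add: wl_def)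
    have sx: "S = (\<Sum>i<q'. i) + (\<Sum>i<q. q' + i)"
      unfolding S_def lessThan_atLeast0[symmetric] add.commute[of q q'] sum_split_add by simp
    have a: "(\<Sum>i<q'. r * (q + i)) = r * (q' * q + (\<Sum>i<q'. i))"
      by (simp add: sum_distrib_left[symmetric] sum.distrib)
    have b: "(\<Sum>i<q. r * (q' + i)) = r * (\<Sum>i<q. q' + i)"
      by (simp only: sum_distrib_left)
    have gen: "\<And>X Y W S. W = r * (q' * q + X) + r * Y \<Longrightarrow> S = X + Y \<Longrightarrow> W = r * q * q' + r * S"
      by (simp add: algebra_simps)
    show ?thesis by (rule gen[of W "\<Sum>i<q'. i" "\<Sum>i<q. q' + i" S]) (simp_all only: w a b sx)
  qed
  have PR: "PR = q' * p + q * p'"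
    unfolding PR_def lessThan_atLeast0[symmetric] add.commute[of q q'] sum_split_add by (simp add: pr_def)
  have "l ^ (r * S) * (l ^ (r * q * q') * Phi g k q q' (l * s) (l * t)) = l ^ W * Phi g k q q' (l * s) (l * t)"
    unfolding W power_add by (simp only: mult_ac)
  also have "\<dots> = l ^ (PR + r * S) * Phi g k q q' s t" by (rule eq1)
  also have "\<dots> = l ^ (r * S) * (l ^ (q' * p + q * p') * Phi g k q q' s t)"
    unfolding PR power_add by (simp only: mult_ac)
  finally have "l ^ (r * S) * (l ^ (r * q * q') * Phi g k q q' (l * s) (l * t)) = l ^ (r * S) * (l ^ (q' * p + q * p') * Phi g k q q' s t)" .
  then show ?thesis using l by simp
qed

declare One_nat_def [simp del]

definition pf :: "(complex \<Rightarrow> complex) \<Rightarrow> bool" where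
  "pf h \<longleftrightarrow> (\<exists>R. \<forall>x. h x = poly R x)"

lemma pf_const: "pf (\<lambda>x. c)" unfolding pf_def by (rule exI[of _ "[:c:]"]) simp
lemma pf_id: "pf (\<lambda>x. x)" unfolding pf_def by (rule exI[of _ "[:0,1:]"]) simp
lemma pf_add: "pf h1 \<Longrightarrow> pf h2 \<Longrightarrow> pf (\<lambda>x. h1 x + h2 x)"
  unfolding pf_def by (metis poly_add)
lemma pf_mult: "pf h1 \<Longrightarrow> pf h2 \<Longrightarrow> pf (\<lambda>x. h1 x * h2 x)"
  unfolding pf_def by (metis poly_mult)
lemma pf_pow: "pf h \<Longrightarrow> pf (\<lambda>x. h x ^ n)"
  unfolding pf_def by (metis poly_power)
lemma pf_sum: "finite A \<Longrightarrow> (\<And>a. a \<in> A \<Longrightarrow> pf (h a)) \<Longrightarrow> pf (\<lambda>x. \<Sum>a\<in>A. h a x)"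
  by (induction A rule: finite_induct) (simp_all add: pf_const pf_add)
lemma pf_prod: "finite A \<Longrightarrow> (\<And>a. a \<in> A \<Longrightarrow> pf (h a)) \<Longrightarrow> pf (\<lambda>x. \<Prod>a\<in>A. h a x)"
  by (induction A rule: finite_induct) (simp_all add: pf_const pf_mult)
lemma pf_if: "pf h1 \<Longrightarrow> pf h2 \<Longrightarrow> pf (\<lambda>x. if b then h1 x else h2 x)"
  by (cases b) simp_all

lemma pf_coeff_Ev_s: "pf (\<lambda>s. coeff (Ev s t g) j)"
  unfolding coeff_Ev
  by (rule pf_sum, simp, rule pf_mult[OF pf_mult[OF pf_const pf_pow[OF pf_id]] pf_const])

lemma pf_coeff_Ev_t: "pf (\<lambda>t. coeff (Ev s t g) j)"
  unfolding coeff_Ev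
  by (rule pf_sum, simp, rule pf_mult[OF pf_const pf_pow[OF pf_id]])

lemma pf_Phi_s: "pf (\<lambda>s. Phi g k q q' s t)"
proof -
  have eq: "(\<lambda>s. Phi g k q q' s t) = (\<lambda>s. \<Sum>\<sigma>\<in>{\<sigma>. \<sigma> permutes {0..<q+q'}}. of_int (sign \<sigma>) *
      (\<Prod>i\<in>{0..<q+q'}. sylm q q' (Ev s t g) (Ev s t k) $$ (i, \<sigma> i)))"
    by (simp add: Phi_def det_expand[OF sylm_carrier])
  moreover have "pf (\<lambda>x. \<Sum>\<sigma>\<in>{\<sigma>. \<sigma> permutes {0..<q+q'}}. of_int (sign \<sigma>) *
      (\<Prod>i\<in>{0..<q+q'}. sylm q q' (Ev (x) (t) g) (Ev (x) (t) k) $$ (i, \<sigma> i)))"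
  proof (rule pf_sum)
    fix \<sigma> assume \<sigma>: "\<sigma> \<in> {\<sigma>. \<sigma> permutes {0..<q+q'}}"
    show "pf (\<lambda>s. of_int (sign \<sigma>) * (\<Prod>i\<in>{0..<q+q'}. sylm q q' (Ev s t g) (Ev s t k) $$ (i, \<sigma> i)))"
    proof (rule pf_mult[OF pf_const pf_prod])
      fix i assume i: "i \<in> {0..<q+q'}"
      then have "\<sigma> i \<in> {0..<q+q'}" using \<sigma> by (simp add: permutes_in_image)
      then have "(\<lambda>s. sylm q q' (Ev s t g) (Ev s t k) $$ (i, \<sigma> i)) = (\<lambda>s. if i < q' then (if i \<le> \<sigma> i then coeff (Ev s t g) (\<sigma> i - i) else 0)
        else (if i - q' \<le> \<sigma> i then coeff (Ev s t k) (\<sigma> i - (i - q')) else 0))"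
        using i by (simp add: sylm_index)
      moreover have "pf (\<lambda>s. if i < q' then (if i \<le> \<sigma> i then coeff (Ev s t g) (\<sigma> i - i) else 0)
        else (if i - q' \<le> \<sigma> i then coeff (Ev s t k) (\<sigma> i - (i - q')) else 0))" by (intro pf_if pf_coeff_Ev_s pf_const)
      ultimately show "pf (\<lambda>s. sylm q q' (Ev s t g) (Ev s t k) $$ (i, \<sigma> i))" by simp
    qed simp
  qed (simp add: finite_permutations)
  ultimately show ?thesis by simp
qed

lemma pf_Phi_t: "pf (\<lambda>t. Phi g k q q' s t)"
proof -
  have eq: "(\<lambda>t. Phi g k q q' s t) = (\<lambda>t. \<Sum>\<sigma>\<in>{\<sigma>. \<sigma> permutes {0..<q+q'}}. of_int (sign \<sigma>) *
      (\<Prod>i\<in>{0..<q+q'}. sylm q q' (Ev s t g) (Ev s t k) $$ (i, \<sigma> i)))"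
    by (simp add: Phi_def det_expand[OF sylm_carrier])
  moreover have "pf (\<lambda>x. \<Sum>\<sigma>\<in>{\<sigma>. \<sigma> permutes {0..<q+q'}}. of_int (sign \<sigma>) *
      (\<Prod>i\<in>{0..<q+q'}. sylm q q' (Ev (s) (x) g) (Ev (s) (x) k) $$ (i, \<sigma> i)))"
  proof (rule pf_sum)
    fix \<sigma> assume \<sigma>: "\<sigma> \<in> {\<sigma>. \<sigma> permutes {0..<q+q'}}"
    show "pf (\<lambda>t. of_int (sign \<sigma>) * (\<Prod>i\<in>{0..<q+q'}. sylm q q' (Ev s t g) (Ev s t k) $$ (i, \<sigma> i)))"
    proof (rule pf_mult[OF pf_const pf_prod])
      fix i assume i: "i \<in> {0..<q+q'}"
      then have "\<sigma> i \<in> {0..<q+q'}" using \<sigma> by (simp add: permutes_in_image)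
      then have "(\<lambda>t. sylm q q' (Ev s t g) (Ev s t k) $$ (i, \<sigma> i)) = (\<lambda>t. if i < q' then (if i \<le> \<sigma> i then coeff (Ev s t g) (\<sigma> i - i) else 0)
        else (if i - q' \<le> \<sigma> i then coeff (Ev s t k) (\<sigma> i - (i - q')) else 0))"
        using i by (simp add: sylm_index)
      moreover have "pf (\<lambda>t. if i < q' then (if i \<le> \<sigma> i then coeff (Ev s t g) (\<sigma> i - i) else 0)
        else (if i - q' \<le> \<sigma> i then coeff (Ev s t k) (\<sigma> i - (i - q')) else 0))" by (intro pf_if pf_coeff_Ev_t pf_const)
      ultimately show "pf (\<lambda>t. sylm q q' (Ev s t g) (Ev s t k) $$ (i, \<sigma> i))" by simp
    qed simp
  qed (simp add: finite_permutations)
  ultimately show ?thesis by simp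
qed

theorem common_zero:
  assumes g: "g \<in> S_deg r (int p, int q)" and k: "k \<in> S_deg r (int p', int q')"
    and N: "r * q * q' < q' * p + q * p'"
  shows "\<exists>x. outside_Z x \<and> peval g x = 0 \<and> peval k x = 0"
proof (cases "\<exists>u. Phi g k q q' u 1 = 0")
  case True
  then obtain u where u: "Phi g k q q' u 1 = 0" by blast
  have "u \<noteq> 0 \<or> (1::complex) \<noteq> 0" by simp
  from Phi_zero_point[OF g k this u] show ?thesis .
next
  case False
  obtain R where R: "\<And>s. Phi g k q q' s 1 = poly R s" using pf_Phi_s unfolding pf_def by blast
  have "constant (poly R)"
  proof (rule ccontr)
    assume "\<not> constant (poly R)"
    then obtain z where "poly R z = 0" using fundamental_theorem_of_algebra by blast
    then show False using False R by metis
  qed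
  then have cst: "Phi g k q q' s 1 = Phi g k q q' 0 1" for s using R unfolding constant_def by metis
  define c where "c = Phi g k q q' 0 1"
  define n where "n = q' * p + q * p' - r * q * q'"
  have n: "q' * p + q * p' = r * q * q' + n" "n > 0" using N by (simp_all add: n_def)
  obtain R2 where R2: "\<And>t. Phi g k q q' 1 t = poly R2 t" using pf_Phi_t unfolding pf_def by blast
  have val: "poly R2 t = poly (monom c n) t" if t: "t \<noteq> 0" for t
  proof -
    have "t ^ (r * q * q') * Phi g k q q' (t * (1/t)) (t * 1) = t ^ (q' * p + q * p') * Phi g k q q' (1/t) 1"
      by (rule Phi_scale[OF g k t])
    moreover have "t * (1/t) = 1" "t * 1 = t" using t by simp_all
    moreover have "Phi g k q q' (1/t) 1 = c" unfolding c_def by (rule cst)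
    ultimately have "t ^ (r * q * q') * Phi g k q q' 1 t = t ^ (q' * p + q * p') * c" by simp
    also have "\<dots> = t ^ (r * q * q') * (t ^ n * c)" by (simp only: n(1) power_add mult.assoc)
    finally have "t ^ (r * q * q') * Phi g k q q' 1 t = t ^ (r * q * q') * (t ^ n * c)" .
    then have "Phi g k q q' 1 t = t ^ n * c" using t by simp
    then show ?thesis by (simp add: R2 poly_monom mult_ac)
  qed
  have "R2 = monom c n"
  proof (rule ccontr)
    assume "R2 \<noteq> monom c n"
    then have "R2 - monom c n \<noteq> 0" by simp
    then have fin: "finite {x. poly (R2 - monom c n) x = 0}" by (rule poly_roots_finite)
    have "UNIV - {0} \<subseteq> {x. poly (R2 - monom c n) x = 0}" using val by auto
    then have "finite (UNIV - {0::complex})" using fin finite_subset by blast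
    then show False by (simp add: infinite_UNIV_char_0)
  qed
  then have z: "Phi g k q q' 1 0 = 0" using R2[of 0] n(2) by (simp add: poly_monom)
  have "(1::complex) \<noteq> 0 \<or> (0::complex) \<noteq> 0" by simp
  from Phi_zero_point[OF g k this z] show ?thesis .
qed

declare One_nat_def [simp del]

definition fits :: "nat \<Rightarrow> complex poly poly \<Rightarrow> nat \<Rightarrow> nat \<Rightarrow> bool" where
  "fits r G p q \<longleftrightarrow> (\<forall>i j. coeff (coeff G j) i \<noteq> 0 \<longrightarrow> j \<le> q \<and> i + r * (q - j) \<le> p)"

definition homog :: "nat \<Rightarrow> complex poly poly \<Rightarrow> nat \<Rightarrow> nat \<Rightarrow> cpoly" where
  "homog r G p q = Abs_poly_mapping (\<lambda>e. if mono_deg r e = (int p, int q) then coeff (coeff G (expo 2 e)) (expo 1 e) else 0)"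

lemma finite_class: "finite {e. mono_deg r e = (int p, int q)}"
proof (rule finite_subset)
  show "{e. mono_deg r e = (int p, int q)} \<subseteq> {..p} \<times> {..q} \<times> {..p} \<times> {..q}"
  proof
    fix e assume "e \<in> {e. mono_deg r e = (int p, int q)}"
    then have "int (expo 1 e) + int (expo 3 e) + int r * int (expo 4 e) = int p" "int (expo 2 e) + int (expo 4 e) = int q"
      by (simp_all add: mono_deg_expo)
    then have "int (expo 1 e + expo 3 e + r * expo 4 e) = int p" "int (expo 2 e + expo 4 e) = int q" by simp_all
    then have "expo 1 e + expo 3 e + r * expo 4 e = p" "expo 2 e + expo 4 e = q" by (simp_all only: of_nat_eq_iff)
    then have "expo 1 e \<le> p" "expo 3 e \<le> p" "expo 2 e \<le> q" "expo 4 e \<le> q" by linarith+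
    then show "e \<in> {..p} \<times> {..q} \<times> {..p} \<times> {..q}" by (cases e) (simp add: expo_def)
  qed
qed simp

lemma lookup_homog: "Poly_Mapping.lookup (homog r G p q) e =
   (if mono_deg r e = (int p, int q) then coeff (coeff G (expo 2 e)) (expo 1 e) else 0)"
proof -
  have "finite {e. (if mono_deg r e = (int p, int q) then coeff (coeff G (expo 2 e)) (expo 1 e) else 0) \<noteq> 0}"
    by (rule finite_subset[OF _ finite_class[of r p q]]) auto
  then show ?thesis unfolding homog_def by (simp add: Abs_poly_mapping_inverse)
qed

lemma homog_S: "homog r G p q \<in> S_deg r (int p, int q)"
  by (auto simp: S_deg_def in_keys_iff lookup_homog split: if_splits)

lemma Dc_homog:
  assumes "fits r G p q"
  shows "Dc 1 (homog r G p q) = G"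
proof (rule poly_eqI)
  fix j
  show "coeff (Dc 1 (homog r G p q)) j = coeff G j"
  proof (rule poly_eqI)
    fix i
    show "coeff (coeff (Dc 1 (homog r G p q)) j) i = coeff (coeff G j) i"
    proof (cases "coeff (coeff G j) i = 0")
      case False
      with assms have fit: "j \<le> q" "i + r * (q - j) \<le> p" by (auto simp: fits_def)
      define e0 where "e0 = (i, j, p - (i + r * (q - j)), q - j)"
      have cls: "mono_deg r e0 = (int p, int q)" using fit by (simp add: e0_def mono_deg_def of_nat_diff)
      have "coeff (coeff (Dc 1 (homog r G p q)) (expo 2 e0)) (expo 1 e0) = Poly_Mapping.lookup (homog r G p q) e0 * 1 ^ expo 3 e0"
        by (rule coeff_coeff_Dc_hom[OF homog_S cls])
      also have "\<dots> = coeff (coeff G (expo 2 e0)) (expo 1 e0)" by (simp add: lookup_homog cls)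
      finally show ?thesis by (simp add: e0_def)
    next
      case True
      show ?thesis
      proof (rule ccontr)
        assume "coeff (coeff (Dc 1 (homog r G p q)) j) i \<noteq> coeff (coeff G j) i"
        then have "coeff (coeff (Dc 1 (homog r G p q)) j) i \<noteq> 0" using True by simp
        then obtain e where "e \<in> Poly_Mapping.keys (homog r G p q)" "expo 1 e = i" "expo 2 e = j"
          using coeff_coeff_Dc_nz by blast
        then show False using True by (auto simp: in_keys_iff lookup_homog split: if_splits)
      qed
    qed
  qed
qed

lemma fits_large: "fits r G (Max ((\<lambda>j. degree (coeff G j)) ` {..degree G}) + r * degree G) (degree G)"
  unfolding fits_def
proof (intro allI impI)
  fix i j assume nz: "coeff (coeff G j) i \<noteq> 0"
  then have j: "j \<le> degree G" by (metis coeff_0 le_degree)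
  have "i \<le> degree (coeff G j)" using nz le_degree by blast
  also have "\<dots> \<le> Max ((\<lambda>j. degree (coeff G j)) ` {..degree G})" using j by (intro Max_ge) auto
  finally have "i \<le> Max ((\<lambda>j. degree (coeff G j)) ` {..degree G})" .
  moreover have "r * (degree G - j) \<le> r * degree G" by simp
  ultimately show "j \<le> degree G \<and> i + r * (degree G - j) \<le> Max ((\<lambda>j. degree (coeff G j)) ` {..degree G}) + r * degree G"
    using j by linarith
qed

definition pmin :: "nat \<Rightarrow> complex poly poly \<Rightarrow> nat" where
  "pmin r G = (LEAST p. fits r G p (degree G))"

lemma pmin_fits: "fits r G (pmin r G) (degree G)"
  unfolding pmin_def by (rule LeastI_ex) (use fits_large in blast)

lemma pmin_e3:
  assumes "G \<noteq> 0"
  shows "\<exists>e\<in>Poly_Mapping.keys (homog r G (pmin r G) (degree G)). expo 3 e = 0"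
proof (rule ccontr)
  assume H: "\<not> ?thesis"
  let ?p = "pmin r G" and ?m = "degree G"
  have key: "i + r * (?m - j) < ?p \<and> j \<le> ?m" if nz: "coeff (coeff G j) i \<noteq> 0" for i j
  proof -
    from pmin_fits nz have fit: "j \<le> ?m" "i + r * (?m - j) \<le> ?p" by (auto simp: fits_def)
    define e0 where "e0 = (i, j, ?p - (i + r * (?m - j)), ?m - j)"
    have cls: "mono_deg r e0 = (int ?p, int ?m)" using fit by (simp add: e0_def mono_deg_def of_nat_diff)
    have "Poly_Mapping.lookup (homog r G ?p ?m) e0 = coeff (coeff G (expo 2 e0)) (expo 1 e0)" by (simp add: lookup_homog cls)
    then have "e0 \<in> Poly_Mapping.keys (homog r G ?p ?m)" using nz by (simp add: in_keys_iff e0_def)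
    then have "expo 3 e0 \<noteq> 0" using H by metis
    then show ?thesis using fit by (simp add: e0_def)
  qed
  have "coeff (coeff G ?m) (degree (coeff G ?m)) \<noteq> 0" using assms by simp
  with key have p1: "?p \<ge> 1" by fastforce
  have "fits r G (?p - 1) ?m" unfolding fits_def using key by fastforce
  moreover have "\<not> fits r G (?p - 1) ?m" unfolding pmin_def
    by (rule not_less_Least) (use p1 pmin_def in simp)
  ultimately show False by simp
qed

lemma fits00_unit:
  assumes "G \<noteq> 0" "fits r G 0 0"
  shows "is_unit G"
proof -
  define c where "c = coeff (coeff G 0) 0"
  have G: "G = [:[:c:]:]"
  proof (rule poly_eqI)
    fix j show "coeff G j = coeff [:[:c:]:] j"
    proof (rule poly_eqI)
      fix i show "coeff (coeff G j) i = coeff (coeff [:[:c:]:] j) i"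
        using assms(2) by (cases "coeff (coeff G j) i = 0") (auto simp: fits_def c_def coeff_pCons split: nat.splits)
    qed
  qed
  then have "c \<noteq> 0" using assms(1) by auto
  then show ?thesis unfolding G by (simp add: is_unit_poly_iff dvd_field_iff)
qed

lemma arith_N:
  fixes p q p' q' r a b :: nat
  assumes "q + q' = b" "b \<ge> 1" "p + p' = a" "a > r * b" "\<not> (p = 0 \<and> q = 0)" "\<not> (p' = 0 \<and> q' = 0)"
  shows "r * q * q' < q' * p + q * p'"
proof (cases "q = 0 \<or> q' = 0")
  case True
  then show ?thesis
  proof
    assume "q = 0" then have "q' \<ge> 1" "p \<ge> 1" using assms by auto
    then show ?thesis using \<open>q = 0\<close> by (simp add: Suc_le_eq)
  next
    assume "q' = 0" then have "q \<ge> 1" "p' \<ge> 1" using assms by auto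
    then show ?thesis using \<open>q' = 0\<close> by (simp add: Suc_le_eq)
  qed
next
  case False
  then have q: "q \<ge> 1" "q' \<ge> 1" by auto
  have "r * b = r * q + r * q'" using assms(1) by (simp add: distrib_left[symmetric])
  then have ab: "p + p' > r * q + r * q'" using assms(3,4) by linarith
  show ?thesis
  proof (cases "r * q \<le> p")
    case True
    have A: "q' * (r * q) \<le> q' * p" using True by simp
    show ?thesis
    proof (cases "p' = 0")
      case p0: True
      then have "p > r * q" using ab by simp
      then have "q' * (r * q) < q' * p" using q by simp
      then show ?thesis using p0 by (simp add: mult_ac)
    next
      case False
      then have "q * p' \<noteq> 0" using q by simp
      then have "q * p' \<ge> 1" by linarith
      moreover have "r * q * q' = q' * (r * q)" by (simp add: mult_ac)
      ultimately show ?thesis using A by linarith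
    qed
  next
    case False
    then have "p' > r * q'" using ab by simp
    then have "q * (r * q') < q * p'" using q by simp
    moreover have "r * q * q' = q * (r * q')" by (simp add: mult_ac)
    ultimately show ?thesis by linarith
  qed
qed

declare One_nat_def [simp del]

lemma peval_corner:
  assumes p: "p \<in> S_deg r (int aa, int bb)"
  shows "peval p (pt 1 1 0 0) = Poly_Mapping.lookup p (aa,bb,0,0)"
proof -
  have "peval p (pt 1 1 0 0) = (\<Sum>e\<in>Poly_Mapping.keys p. if e = (aa,bb,0,0) then Poly_Mapping.lookup p e else 0)"
    unfolding peval_mon mon_pt
  proof (rule sum.cong[OF refl])
    fix e assume e: "e \<in> Poly_Mapping.keys p"
    show "Poly_Mapping.lookup p e * (1 ^ expo 1 e * 1 ^ expo 2 e * 0 ^ expo 3 e * 0 ^ expo 4 e) =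
        (if e = (aa,bb,0,0) then Poly_Mapping.lookup p e else 0)"
    proof (cases "expo 3 e = 0 \<and> expo 4 e = 0")
      case True
      with S_deg_expo1[OF p e] S_deg_expo2[OF p e] have "e = (aa,bb,0,0)" by (intro mono_eqI) auto
      then show ?thesis by simp
    next
      case False
      then have "e \<noteq> (aa,bb,0,0)" by auto
      with False show ?thesis by (auto simp: power_0_left)
    qed
  qed
  also have "\<dots> = Poly_Mapping.lookup p (aa,bb,0,0)"
    by (simp add: sum.delta' in_keys_iff)
  finally show ?thesis .
qed

lemma corner_nz:
  assumes f: "f \<in> S_deg r (int aa, int bb)" and nd: "nondegenerate f"
  shows "Poly_Mapping.lookup f (aa,bb,0,0) \<noteq> 0"
proof
  assume z: "Poly_Mapping.lookup f (aa,bb,0,0) = 0"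
  have "outside_Z (pt 1 1 0 0)" by (simp add: outside_Z_def)
  moreover have "\<forall>i\<in>{1..4::nat}. peval (xdiff i f) (pt 1 1 0 0) = 0"
    using peval_corner[OF xdiff_S_deg[OF f]] z by (simp add: lookup_xdiff)
  ultimately show False using nd unfolding nondegenerate_def by blast
qed

lemma degenerate_of_factor:
  assumes "f = g * k" "outside_Z x" "peval g x = 0" "peval k x = 0"
  shows "\<not> nondegenerate f"
proof -
  have "\<forall>i\<in>{1..4::nat}. peval (xdiff i f) x = 0"
    using assms by (simp add: xdiff_mult peval_add peval_mult)
  with assms(2) show ?thesis unfolding nondegenerate_def by blast
qed

lemma F_irreducible:
  assumes f: "f \<in> S_deg r (int aa, int bb)" and bb: "bb \<ge> 1" and aa: "aa > r * bb" and nd: "nondegenerate f"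
  shows "irreducible (Dc 1 f)"
proof -
  let ?F = "Dc 1 f"
  have cl0: "mono_deg r (aa,bb,0,0) = (int aa, int bb)" by (simp add: mono_deg_def)
  have cF: "coeff (coeff ?F bb) aa \<noteq> 0"
    using coeff_coeff_Dc_hom[OF f cl0, of 1] corner_nz[OF f nd] by simp
  then have cF': "coeff ?F bb \<noteq> 0" by auto
  have degF: "degree ?F = bb"
  proof (rule antisym)
    show "degree ?F \<le> bb" by (rule deg_Dc_le) (use S_deg_expo2[OF f] in fastforce)
    show "bb \<le> degree ?F" using cF' le_degree by blast
  qed
  have F0: "?F \<noteq> 0" using cF by auto
  have nu: "\<not> is_unit ?F"
  proof
    assume "is_unit ?F"
    then obtain c where "?F = [:c:]" by (rule is_unit_polyE)
    then have "degree ?F = 0" by simp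
    then show False using degF bb by simp
  qed
  show ?thesis
  proof (rule irreducibleI[OF F0 nu])
    fix G K assume GK: "?F = G * K"
    show "is_unit G \<or> is_unit K"
    proof (rule ccontr)
      assume nu2: "\<not> (is_unit G \<or> is_unit K)"
      have G0: "G \<noteq> 0" and K0: "K \<noteq> 0" using F0 GK by auto
      define m where "m = degree G"
      define m' where "m' = degree K"
      have mm: "m + m' = bb" using degF GK degree_mult_eq[OF G0 K0] by (simp add: m_def m'_def)
      define pg where "pg = pmin r G"
      define pk where "pk = pmin r K"
      define g where "g = homog r G pg m"
      define k where "k = homog r K pk m'"
      have Dg: "Dc 1 g = G" unfolding g_def pg_def m_def by (rule Dc_homog[OF pmin_fits])
      have Dk: "Dc 1 k = K" unfolding k_def pk_def m'_def by (rule Dc_homog[OF pmin_fits])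
      have gS: "g \<in> S_deg r (int pg, int m)" unfolding g_def by (rule homog_S)
      have kS: "k \<in> S_deg r (int pk, int m')" unfolding k_def by (rule homog_S)
      have gkS: "g * k \<in> S_deg r (int (pg + pk), int bb)"
        using S_deg_mult[OF gS kS] mm[symmetric] by (simp add: add_Pair)
      have Dgk: "Dc 1 (g * k) = ?F" using GK by (simp add: Dc_mult Dg Dk)
      obtain e where e: "e \<in> Poly_Mapping.keys (g * k)" "expo 1 e = aa" "expo 2 e = bb"
        using coeff_coeff_Dc_nz[of 1 "g * k" bb aa] cF Dgk by auto
      have "expo 4 e = 0" using S_deg_expo2[OF gkS e(1)] e(3) by simp
      then have le: "aa \<le> pg + pk" using S_deg_expo1[OF gkS e(1)] e(2) by simp
      define d where "d = pg + pk - aa"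
      have v3S: "var 3 ^ d * f \<in> S_deg r (int (pg + pk), int bb)"
        using S_deg_mult[OF var3_pow_S_deg f, of d] le by (simp add: add_Pair d_def)
      have "Dc 1 (var 3 ^ d * f) = ?F" by (simp add: Dc_mult Dc_pow Dc_var3 pCons_one)
      then have eq: "g * k = var 3 ^ d * f" using Dc_inj[OF gkS v3S] Dgk by simp
      have d0: "d = 0"
      proof (rule ccontr)
        assume "d \<noteq> 0"
        obtain eg where eg: "eg \<in> Poly_Mapping.keys g" "expo 3 eg = 0"
          using pmin_e3[OF G0] unfolding g_def pg_def m_def by blast
        obtain ek where ek: "ek \<in> Poly_Mapping.keys k" "expo 3 ek = 0"
          using pmin_e3[OF K0] unfolding k_def pk_def m'_def by blast
        have "coeff (coeff (Dc 0 g) (expo 2 eg)) (expo 1 eg) = Poly_Mapping.lookup g eg * 0 ^ expo 3 eg"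
          by (rule coeff_coeff_Dc_hom[OF gS S_deg_keys[OF gS eg(1)]])
        then have g0: "Dc 0 g \<noteq> 0" using eg by (auto simp: in_keys_iff)
        have "coeff (coeff (Dc 0 k) (expo 2 ek)) (expo 1 ek) = Poly_Mapping.lookup k ek * 0 ^ expo 3 ek"
          by (rule coeff_coeff_Dc_hom[OF kS S_deg_keys[OF kS ek(1)]])
        then have k0: "Dc 0 k \<noteq> 0" using ek by (auto simp: in_keys_iff)
        have "Dc 0 (g * k) \<noteq> 0" using g0 k0 by (simp add: Dc_mult)
        moreover have "Dc 0 (var 3 ^ d * f) = 0" using \<open>d \<noteq> 0\<close> by (simp add: Dc_mult Dc_pow Dc_var3)
        ultimately show False using eq by simp
      qed
      then have gkf: "f = g * k" using eq by simp
      have sum_p: "pg + pk = aa" using d0 le by (simp add: d_def)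
      have ng: "\<not> (pg = 0 \<and> m = 0)"
      proof
        assume "pg = 0 \<and> m = 0"
        then have "fits r G 0 0" using pmin_fits[of r G] by (simp add: pg_def m_def)
        then show False using fits00_unit[OF G0] nu2 by blast
      qed
      have nk: "\<not> (pk = 0 \<and> m' = 0)"
      proof
        assume "pk = 0 \<and> m' = 0"
        then have "fits r K 0 0" using pmin_fits[of r K] by (simp add: pk_def m'_def)
        then show False using fits00_unit[OF K0] nu2 by blast
      qed
      have "r * m * m' < m' * pg + m * pk" by (rule arith_N[OF mm bb sum_p aa ng nk])
      then obtain x where "outside_Z x" "peval g x = 0" "peval k x = 0"
        using common_zero[OF gS kS] by blast
      then have "\<not> nondegenerate f" using degenerate_of_factor[OF gkf] by blast
      then show False using nd by simp
    qed
  qed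
qed

declare One_nat_def [simp del]

lemma pscale_zero_left: "pscale 0 p = 0"
  by (simp add: pscale_def const_def)

lemma pscale_mult: "pscale c (m * f) = pscale c m * f"
  by (simp add: pscale_def mult.assoc)

lemma Dc_pscale: "Dc 1 (pscale c p) = [:[:c:]:] * Dc 1 p"
  by (simp add: pscale_def Dc_mult Dc_const)

lemma ample_decomp:
  assumes "ample r \<beta>"
  obtains aa bb where "\<beta> = (int aa, int bb)" "bb \<ge> 1" "aa > r * bb"
proof -
  obtain b1 b2 where \<beta>: "\<beta> = (b1, b2)" by (cases \<beta>)
  have "inter r \<beta> (Dcls r 1) > 0" "inter r \<beta> (Dcls r 2) > 0" using assms by (auto simp: ample_def)
  then have h: "b2 > 0" "b1 - int r * b2 > 0" by (simp_all add: inter_def Dcls_def \<beta>)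
  then have "b1 > 0" by (smt (verit) mult_nonneg_nonneg of_nat_0_le_iff)
  define aa where "aa = nat b1"
  define bb where "bb = nat b2"
  have "\<beta> = (int aa, int bb)" using h \<open>b1 > 0\<close> by (simp add: \<beta> aa_def bb_def)
  moreover have "bb \<ge> 1" using h by (simp add: bb_def)
  moreover have "int aa > int r * int bb" using h \<open>b1 > 0\<close> by (simp add: aa_def bb_def)
  then have "aa > r * bb" by (simp only: of_nat_mult[symmetric] of_nat_less_iff)
  ultimately show ?thesis using that by blast
qed

lemma part1:
  assumes amp: "ample r \<beta>" and f: "f \<in> S_deg r \<beta>" and nd: "nondegenerate f"
    and h: "h \<in> S_deg r \<beta>" and hn: "h \<notin> {pscale c f | c. True}"
    and a: "a \<in> S_deg r (\<beta> + K_cls r + K_cls r)" and b: "b \<in> S_deg r (\<beta> + K_cls r + K_cls r)"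
    and eq0: "a * f + b * h = 0"
  shows "a = 0 \<and> b = 0"
proof -
  obtain aa bb where \<beta>: "\<beta> = (int aa, int bb)" and bb: "bb \<ge> 1" and aa: "aa > r * bb"
    using ample_decomp[OF amp] by blast
  let ?\<gamma> = "\<beta> + K_cls r + K_cls r"
  have f': "f \<in> S_deg r (int aa, int bb)" using f \<beta> by simp
  have h': "h \<in> S_deg r (int aa, int bb)" using h \<beta> by simp
  let ?F = "Dc 1 f" and ?A = "Dc 1 a" and ?B = "Dc 1 b" and ?H = "Dc 1 h"
  have irr: "irreducible ?F" by (rule F_irreducible[OF f' bb aa nd])
  then have prime: "prime_elem ?F" by (rule irreducible_imp_prime_elem)
  have F0: "?F \<noteq> 0" using irr by auto
  have cl0: "mono_deg r (aa,bb,0,0) = (int aa, int bb)" by (simp add: mono_deg_def)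
  have cF: "coeff (coeff ?F bb) aa \<noteq> 0"
    using coeff_coeff_Dc_hom[OF f' cl0, of 1] corner_nz[OF f' nd] by simp
  have degF: "degree ?F = bb"
  proof (rule antisym)
    show "degree ?F \<le> bb" by (rule deg_Dc_le) (use S_deg_expo2[OF f'] in fastforce)
    show "bb \<le> degree ?F" using cF le_degree by (metis coeff_0)
  qed
  have ABeq: "?A * ?F + ?B * ?H = 0" using eq0 by (metis Dc_add Dc_mult Dc_zero)
  show ?thesis
  proof (cases "b = 0")
    case True
    then have "?A * ?F = 0" using ABeq by simp
    then have "?A = 0" using F0 by simp
    then have "Dc 1 a = Dc 1 0" by simp
    then have "a = 0" by (rule Dc_inj[OF a S_deg_zero])
    with True show ?thesis by simp
  next
    case False
    have B0: "?B \<noteq> 0"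
    proof
      assume "?B = 0"
      then have "Dc 1 b = Dc 1 0" by simp
      then have "b = 0" by (rule Dc_inj[OF b S_deg_zero])
      with False show False by simp
    qed
    have "?B * ?H = ?F * (- ?A)" using ABeq by (simp add: algebra_simps add_eq_0_iff)
    then have "?F dvd ?B * ?H" by simp
    then have "?F dvd ?B \<or> ?F dvd ?H" using prime prime_elem_dvd_multD by blast
    then show ?thesis
    proof
      assume "?F dvd ?B"
      then have "degree ?F \<le> degree ?B" using B0 dvd_imp_degree_le by blast
      moreover have "degree ?B \<le> bb - 1"
      proof (rule deg_Dc_le)
        fix e assume "e \<in> Poly_Mapping.keys b"
        from S_deg_keys[OF b this] have "int (expo 2 e) + int (expo 4 e) = int bb - 4"
          by (simp add: \<beta> K_cls_def mono_deg_expo)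
        then show "expo 2 e \<le> bb - 1" by linarith
      qed
      ultimately show ?thesis using degF bb by simp
    next
      assume "?F dvd ?H"
      then obtain Q where Q: "?H = ?F * Q" by (elim dvdE)
      have h0: "h \<noteq> 0" using hn pscale_zero_left by force
      have H0: "?H \<noteq> 0"
      proof
        assume "?H = 0"
        then have "Dc 1 h = Dc 1 0" by simp
        then have "h = 0" by (rule Dc_inj[OF h S_deg_zero])
        with h0 show False by simp
      qed
      then have Q0: "Q \<noteq> 0" using Q by auto
      have "degree ?H \<le> bb" by (rule deg_Dc_le) (use S_deg_expo2[OF h'] in fastforce)
      then have "degree Q = 0" using Q degree_mult_eq[OF F0 Q0] degF by simp
      then obtain q0 where q0: "Q = [:q0:]" by (elim degree_eq_zeroE)
      have HF: "?H = Polynomial.smult q0 ?F" using Q q0 by simp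
      have q00: "q0 \<noteq> 0" using Q0 q0 by simp
      have cFb: "coeff ?F bb \<noteq> 0" using cF by auto
      have dFb: "degree (coeff ?F bb) = aa"
      proof (rule antisym)
        show "degree (coeff ?F bb) \<le> aa" by (rule deg_coeff_Dc_le) (use S_deg_expo1[OF f'] in fastforce)
        show "aa \<le> degree (coeff ?F bb)" using cF le_degree by blast
      qed
      have "degree (coeff ?H bb) \<le> aa" by (rule deg_coeff_Dc_le) (use S_deg_expo1[OF h'] in fastforce)
      moreover have "coeff ?H bb = q0 * coeff ?F bb" using HF by simp
      ultimately have "degree q0 + aa \<le> aa" using degree_mult_eq[OF q00 cFb] dFb by simp
      then have "degree q0 = 0" by simp
      then obtain c where c: "q0 = [:c:]" by (elim degree_eq_zeroE)
      have "?H = Dc 1 (pscale c f)" using HF c by (simp add: Dc_pscale )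
      then have "h = pscale c f" by (rule Dc_inj[OF h pscale_S_deg[OF f]])
      with hn show ?thesis by blast
    qed
  qed
qed

declare One_nat_def [simp del]

lemma finite_class_any: "finite {e. mono_deg r e = \<gamma>}"
proof (cases "{e. mono_deg r e = \<gamma>} = {}")
  case True show ?thesis unfolding True by simp
next
  case False
  then obtain e0 where e0: "mono_deg r e0 = \<gamma>" by auto
  then have "\<gamma> = (int (nat (fst \<gamma>)), int (nat (snd \<gamma>)))" by (auto simp: mono_deg_expo)
  then show ?thesis using finite_class[of r "nat (fst \<gamma>)" "nat (snd \<gamma>)"] by metis
qed

lemma single_pscale: "Poly_Mapping.single e c = pscale c (Poly_Mapping.single e 1)"
  by (simp add: pscale_def const_def mult_single)

lemma S_subspace: "module.subspace pscale (S_deg r \<gamma>)"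
proof -
  interpret V: vector_space pscale by (rule vector_space_pscale)
  show ?thesis unfolding V.subspace_def using S_deg_add pscale_S_deg by auto
qed

lemma S_span: "S_deg r \<gamma> \<subseteq> module.span pscale ((\<lambda>e. Poly_Mapping.single e 1) ` {e. mono_deg r e = \<gamma>})"
proof
  interpret V: vector_space pscale by (rule vector_space_pscale)
  fix p assume p: "p \<in> S_deg r \<gamma>"
  have "p = (\<Sum>e\<in>Poly_Mapping.keys p. pscale (Poly_Mapping.lookup p e) (Poly_Mapping.single e 1))"
    by (subst pm_decomp) (simp add: single_pscale[symmetric])
  also have "\<dots> \<in> V.span ((\<lambda>e. Poly_Mapping.single e 1) ` {e. mono_deg r e = \<gamma>})"
    by (intro V.span_sum V.span_scale V.span_base) (use S_deg_keys[OF p] in auto)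
  finally show "p \<in> V.span ((\<lambda>e. Poly_Mapping.single e 1) ` {e. mono_deg r e = \<gamma>})" .
qed

lemma dim_part:
  assumes part1': "\<And>a b. a \<in> S_deg r \<gamma> \<Longrightarrow> b \<in> S_deg r \<gamma> \<Longrightarrow> a * f + b * h = 0 \<Longrightarrow> a = 0 \<and> b = 0"
  shows "cdim {a * f + b * h | a b. a \<in> S_deg r \<gamma> \<and> b \<in> S_deg r \<gamma>} = 2 * cdim (S_deg r \<gamma>)"
proof -
  interpret V: vector_space pscale by (rule vector_space_pscale)
  let ?S = "S_deg r \<gamma>"
  let ?E = "{a * f + b * h | a b. a \<in> ?S \<and> b \<in> ?S}"
  have sub: "V.subspace ?S" by (rule S_subspace)
  obtain B where B: "B \<subseteq> ?S" "V.independent B" "?S \<subseteq> V.span B" "card B = V.dim ?S"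
    by (rule V.basis_exists)
  have finB: "finite B"
    using V.independent_span_bound[OF finite_imageI[OF finite_class_any] B(2)] B(1) S_span by blast
  have B0: "0 \<notin> B" using B(2) V.dependent_zero by blast
  have BS: "m \<in> ?S" if "m \<in> B" for m using B(1) that by blast
  define Cf where "Cf = (\<lambda>m. m * f) ` B"
  define Ch where "Ch = (\<lambda>m. m * h) ` B"
  have injf: "inj_on (\<lambda>m. m * f) B"
  proof (rule inj_onI)
    fix x y assume xy: "x \<in> B" "y \<in> B" "x * f = y * f"
    then have "(x - y) * f + 0 * h = 0" by (simp add: algebra_simps)
    moreover have "x - y \<in> ?S" using V.subspace_diff[OF sub BS BS] xy by blast
    ultimately show "x = y" using part1'[of "x - y" 0] by simp
  qed
  have injh: "inj_on (\<lambda>m. m * h) B"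
  proof (rule inj_onI)
    fix x y assume xy: "x \<in> B" "y \<in> B" "x * h = y * h"
    then have "0 * f + (x - y) * h = 0" by (simp add: algebra_simps)
    moreover have "x - y \<in> ?S" using V.subspace_diff[OF sub BS BS] xy by blast
    ultimately show "x = y" using part1'[of 0 "x - y"] by simp
  qed
  have disj: "Cf \<inter> Ch = {}"
  proof -
    have False if "x \<in> B" "y \<in> B" "x * f = y * h" for x y
    proof -
      have "x * f + (- y) * h = 0" using that by simp
      then have "x = 0" using part1'[of x "- y"] BS[OF that(1)] S_deg_uminus[OF BS[OF that(2)]] by blast
      with B0 that(1) show False by simp
    qed
    then show ?thesis unfolding Cf_def Ch_def by auto
  qed
  have finC: "finite (Cf \<union> Ch)" using finB by (simp add: Cf_def Ch_def)
  have cardC: "card (Cf \<union> Ch) = 2 * card B"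
    using card_Un_disjoint[of Cf Ch] finB disj card_image[OF injf] card_image[OF injh]
    by (simp add: Cf_def Ch_def)
  have sumf: "(\<Sum>m\<in>B. pscale (u m) (m * g)) = (\<Sum>m\<in>B. pscale (u m) m) * g" for u g
    by (simp add: pscale_mult sum_distrib_right)
  have sumS: "(\<Sum>m\<in>B. pscale (u m) m) \<in> ?S" for u
    by (rule V.subspace_sum[OF sub]) (use sub BS in \<open>auto simp: V.subspace_def\<close>)
  have indB: "\<And>u. (\<Sum>m\<in>B. pscale (u m) m) = 0 \<Longrightarrow> \<forall>m\<in>B. u m = 0"
    using B(2) V.dependent_finite[OF finB] by blast
  have indep: "V.independent (Cf \<union> Ch)"
  proof
    assume "V.dependent (Cf \<union> Ch)"
    then obtain u where u: "\<exists>v\<in>Cf \<union> Ch. u v \<noteq> 0" "(\<Sum>v\<in>Cf \<union> Ch. pscale (u v) v) = 0"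
      using V.dependent_finite[OF finC] by blast
    have "(\<Sum>v\<in>Cf \<union> Ch. pscale (u v) v) = (\<Sum>v\<in>Cf. pscale (u v) v) + (\<Sum>v\<in>Ch. pscale (u v) v)"
      by (rule sum.union_disjoint) (use finB disj in \<open>auto simp: Cf_def Ch_def\<close>)
    also have "(\<Sum>v\<in>Cf. pscale (u v) v) = (\<Sum>m\<in>B. pscale (u (m * f)) (m * f))"
      unfolding Cf_def by (rule sum.reindex[OF injf, unfolded comp_def])
    also have "(\<Sum>v\<in>Ch. pscale (u v) v) = (\<Sum>m\<in>B. pscale (u (m * h)) (m * h))"
      unfolding Ch_def by (rule sum.reindex[OF injh, unfolded comp_def])
    finally have "(\<Sum>m\<in>B. pscale (u (m * f)) m) * f + (\<Sum>m\<in>B. pscale (u (m * h)) m) * h = 0"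
      using u(2) by (simp add: sumf)
    then have z: "(\<Sum>m\<in>B. pscale (u (m * f)) m) = 0" "(\<Sum>m\<in>B. pscale (u (m * h)) m) = 0"
      using part1'[OF sumS[of "\<lambda>m. u (m * f)"] sumS[of "\<lambda>m. u (m * h)"]] by auto
    have "\<forall>m\<in>B. u (m * f) = 0" using indB[OF z(1)] .
    moreover have "\<forall>m\<in>B. u (m * h) = 0" using indB[OF z(2)] .
    ultimately have "\<forall>v\<in>Cf \<union> Ch. u v = 0" by (auto simp: Cf_def Ch_def)
    with u(1) show False by blast
  qed
  have spanEq: "V.span (Cf \<union> Ch) = V.span ?E"
  proof (subst V.span_eq, rule conjI)
    show "Cf \<union> Ch \<subseteq> V.span ?E"
    proof
      fix v assume "v \<in> Cf \<union> Ch"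
      then have "v \<in> ?E"
      proof
        assume "v \<in> Cf"
        then obtain m where "m \<in> B" "v = m * f" by (auto simp: Cf_def)
        then have "v = m * f + 0 * h \<and> m \<in> ?S \<and> 0 \<in> ?S" using BS by simp
        then show "v \<in> ?E" by blast
      next
        assume "v \<in> Ch"
        then obtain m where "m \<in> B" "v = m * h" by (auto simp: Ch_def)
        then have "v = 0 * f + m * h \<and> 0 \<in> ?S \<and> m \<in> ?S" using BS by simp
        then show "v \<in> ?E" by blast
      qed
      then show "v \<in> V.span ?E" by (rule V.span_base)
    qed
  next
    have mem: "x * g \<in> V.span ((\<lambda>m. m * g) ` B)" if "x \<in> ?S" for x g
    proof -
      have "x \<in> V.span B" using that B(3) by blast
      then obtain u where "x = (\<Sum>m\<in>B. pscale (u m) m)" using V.span_finite[OF finB] by blast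
      then have "x * g = (\<Sum>m\<in>B. pscale (u m) (m * g))" by (simp add: sumf)
      also have "\<dots> \<in> V.span ((\<lambda>m. m * g) ` B)"
        by (intro V.span_sum V.span_scale V.span_base) auto
      finally show ?thesis .
    qed
    show "?E \<subseteq> V.span (Cf \<union> Ch)"
    proof
      fix x assume "x \<in> ?E"
      then obtain a b where ab: "x = a * f + b * h" "a \<in> ?S" "b \<in> ?S" by blast
      have "a * f \<in> V.span (Cf \<union> Ch)" using mem[OF ab(2), of f] V.span_mono[of Cf "Cf \<union> Ch"] by (auto simp: Cf_def)
      moreover have "b * h \<in> V.span (Cf \<union> Ch)" using mem[OF ab(3), of h] V.span_mono[of Ch "Cf \<union> Ch"] by (auto simp: Ch_def)
      ultimately show "x \<in> V.span (Cf \<union> Ch)" using ab(1) V.span_add by simp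
    qed
  qed
  have "V.dim ?E = card (Cf \<union> Ch)" by (rule V.dim_eq_card[OF spanEq indep])
  then show ?thesis unfolding cdim_def using cardC B(4) by simp
qed

theorem mainTheorem7:
  fixes r :: nat and \<beta> :: cls and f :: cpoly
  assumes "ample r \<beta>"
    and "f \<in> S_deg r \<beta>"
    and "nondegenerate f"
    and "J1_deg r f (\<beta> + \<beta> + K_cls r + K_cls r) \<noteq> {0}"
  shows "(\<forall>h \<in> J1_deg r f \<beta> - {pscale c f | c. True}.
            \<forall>a \<in> S_deg r (\<beta> + K_cls r + K_cls r). \<forall>b \<in> S_deg r (\<beta> + K_cls r + K_cls r).
              (a \<noteq> 0 \<or> b \<noteq> 0) \<longrightarrow> a * f + b * h \<noteq> 0)
       \<and> (\<forall>h \<in> J1_deg r f \<beta> - {pscale c f | c. True}.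
            cdim {a * f + b * h | a b.
                a \<in> S_deg r (\<beta> + K_cls r + K_cls r) \<and> b \<in> S_deg r (\<beta> + K_cls r + K_cls r)}
            = 2 * cdim (S_deg r (\<beta> + K_cls r + K_cls r)))"
proof -
  have P: "a = 0 \<and> b = 0"
    if "h \<in> J1_deg r f \<beta> - {pscale c f | c. True}" "a \<in> S_deg r (\<beta> + K_cls r + K_cls r)"
       "b \<in> S_deg r (\<beta> + K_cls r + K_cls r)" "a * f + b * h = 0" for h a b
  proof -
    from that(1) have "h \<in> S_deg r \<beta>" "h \<notin> {pscale c f | c. True}" by (auto simp: J1_deg_def)
    from part1[OF assms(1,2,3) this that(2,3,4)] show ?thesis .
  qed
  show ?thesis
  proof (intro conjI ballI impI)
    fix h a b assume "h \<in> J1_deg r f \<beta> - {pscale c f | c. True}" "a \<in> S_deg r (\<beta> + K_cls r + K_cls r)"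
       "b \<in> S_deg r (\<beta> + K_cls r + K_cls r)" "a \<noteq> 0 \<or> b \<noteq> 0"
    then show "a * f + b * h \<noteq> 0" using P by blast
  next
    fix h assume h: "h \<in> J1_deg r f \<beta> - {pscale c f | c. True}"
    show "cdim {a * f + b * h | a b.
                a \<in> S_deg r (\<beta> + K_cls r + K_cls r) \<and> b \<in> S_deg r (\<beta> + K_cls r + K_cls r)}
            = 2 * cdim (S_deg r (\<beta> + K_cls r + K_cls r))"
      by (rule dim_part) (use P[OF h] in blast)
  qed
qed

end
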